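(* Let $d\ge3$, $\beta>0$, $g:\mathbb{R}^d\to\mathbb{R}$ Lipschitz. There are positive constants $C_1,C_2$ depending only on $d,\beta,g$ such that for any $\varepsilon>0$, $s,t\in\mathbb{Z}_{\ge0}$ and $x\in\mathbb{Z}^d$, \[ |G_\varepsilon(s,x)-G_\varepsilon(t,x)|\le C_1\varepsilon|t-s|^{1/2}e^{C_2(\varepsilon|x|+\varepsilon^2s+\varepsilon^2t)}. \]
   Context: $\{S_n\}_{n\ge0}$ is simple symmetric random walk on $\mathbb{Z}^d$ started at the origin; $g_\varepsilon(x)=g(\varepsilon x)$ and $G_\varepsilon(t,x)=\mathbb{E}(e^{\beta g_\varepsilon(S_t+x)})$ for $t\in\mathbb{Z}_{\ge0}$, $x\in\mathbb{Z}^d$. *)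

theory Defs
  imports "HOL-Analysis.Analysis" "HOL-Probability.Probability"
begin

text \<open>Lattice Z^d is represented as int ^ 'd (the dimension d = CARD('d)).
  One step of simple symmetric random walk: uniform over the 2d vectors \<plusminus>e_i.\<close>

definition srw_step :: "(int ^ 'd) pmf" where
  "srw_step = pmf_of_set {v. \<exists>i. v = axis i 1 \<or> v = axis i (-1)}"

fun srw :: "nat \<Rightarrow> (int ^ 'd) pmf" where
  "srw 0 = return_pmf 0"
| "srw (Suc n) = map_pmf (\<lambda>(a, b). a + b) (pair_pmf (srw n) srw_step)"

definition real_vec :: "int ^ 'd \<Rightarrow> real ^ 'd" where
  "real_vec x = (\<chi> i. real_of_int (x $ i))"

definition G_eps :: "real \<Rightarrow> (real ^ 'd \<Rightarrow> real) \<Rightarrow> real \<Rightarrow> nat \<Rightarrow> int ^ 'd \<Rightarrow> real" where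
  "G_eps \<beta> g \<epsilon> t x =
     measure_pmf.expectation (srw t) (\<lambda>S. exp (\<beta> * g (\<epsilon> *\<^sub>R real_vec (S + x))))"

end

theory Submission
  imports Defs
begin


definition Vst :: "(int ^ 'd) set" where
  "Vst = {v. \<exists>i. v = axis i 1 \<or> v = axis i (-1)}"

lemma Vst_eq: "Vst = range (\<lambda>i. axis i 1) \<union> range (\<lambda>i. axis i (-1))"
  unfolding Vst_def by auto

lemma Vst_fin: "finite (Vst :: (int ^ 'd) set)"
  unfolding Vst_eq by simp

lemma Vst_ne: "(Vst :: (int ^ 'd) set) \<noteq> {}"
  unfolding Vst_def by auto

lemma set_step: "set_pmf srw_step = Vst"
  unfolding srw_step_def Vst_def[symmetric] by (rule set_pmf_of_set[OF Vst_ne Vst_fin])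

lemma fin_srw: "finite (set_pmf (srw n))"
  by (induction n) (auto simp: set_step Vst_fin)

lemma srw_Suc_bind: "srw (Suc n) = bind_pmf (srw n) (\<lambda>a. map_pmf (\<lambda>b. a + b) srw_step)"
  by (simp add: pair_pmf_def map_bind_pmf bind_map_pmf map_pmf_def bind_assoc_pmf bind_return_pmf)

lemma srw_add: "(srw (s + n) :: (int^'d) pmf) = bind_pmf (srw s) (\<lambda>a. map_pmf (\<lambda>b. a + b) (srw n))"
proof (induction n)
  case 0
  then show ?case by (simp add: map_pmf_def bind_return_pmf bind_return_pmf')
next
  case (Suc n)
  have "(srw (s + Suc n) :: (int^'d) pmf) = bind_pmf (srw (s + n)) (\<lambda>c. map_pmf (\<lambda>b. c + b) srw_step)"
    using srw_Suc_bind[of "s+n"] by simp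
  also have "\<dots> = bind_pmf (srw s) (\<lambda>a. map_pmf (\<lambda>b. a + b) (srw (Suc n)))"
    apply (simp only: Suc.IH)
    apply (simp only: srw_Suc_bind)
    apply (simp add: map_pmf_def bind_assoc_pmf bind_return_pmf add.assoc)
    done
  finally show ?case .
qed

lemma E_bind:
  fixes h :: "'b \<Rightarrow> real"
  assumes "finite (set_pmf p)" "\<And>x. finite (set_pmf (f x))"
  shows "measure_pmf.expectation (bind_pmf p f) h
       = measure_pmf.expectation p (\<lambda>a. measure_pmf.expectation (f a) h)"
  using assms
  by (subst pmf_expectation_bind[where A="set_pmf p"]) (auto simp: integral_measure_pmf[where A="set_pmf p"])

lemma axis_neg: "axis i (-1) = - (axis i 1 :: int ^ 'd)"
  by (simp add: vec_eq_iff axis_def)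

lemma step_sym: "map_pmf uminus srw_step = srw_step"
proof -
  have H: "uminus ` Vst = (Vst :: (int ^ 'd) set)"
    unfolding Vst_def
    by (auto simp: image_iff) (metis axis_neg minus_minus)+
  have "map_pmf uminus (pmf_of_set Vst) = pmf_of_set (uminus ` (Vst :: (int ^ 'd) set))"
    by (rule map_pmf_of_set_inj) (auto simp: inj_on_def Vst_fin Vst_ne)
  then show ?thesis unfolding srw_step_def Vst_def[symmetric] H .
qed




lemma int_srw[simp]: "integrable (measure_pmf (srw n)) (f :: _ \<Rightarrow> real)"
  by (rule integrable_measure_pmf_finite[OF fin_srw])

lemma int_step[simp]: "integrable (measure_pmf srw_step) (f :: _ \<Rightarrow> real)"
  by (rule integrable_measure_pmf_finite) (simp add: set_step Vst_fin)

lemma cosh_le: "(exp (a::real) + exp (-a)) / 2 \<le> exp (a\<^sup>2)"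
proof -
  have key: "(exp b + exp (-b)) / 2 \<le> exp (b\<^sup>2)" if "b \<ge> 0" for b :: real
  proof (cases "b \<le> 1")
    case True
    have e1: "exp b \<le> 1 + b + b\<^sup>2" using exp_bound[of b] that True by simp
    have "1 + b \<le> exp b" by (rule exp_ge_add_one_self)
    hence "exp (-b) \<le> 1 / (1 + b)" using that by (simp add: exp_minus field_simps)
    also have "\<dots> \<le> 1 - b + b\<^sup>2"
      using that by (simp add: field_simps power2_eq_square)
    finally have "(exp b + exp (-b)) / 2 \<le> 1 + b\<^sup>2" using e1 by simp
    also have "\<dots> \<le> exp (b\<^sup>2)" using exp_ge_add_one_self[of "b\<^sup>2"] by simp
    finally show ?thesis .
  next
    case False
    have "exp (-b) \<le> exp b" using that by simp
    moreover have "exp b \<le> exp (b\<^sup>2)" using False by (simp add: power2_eq_square)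
    ultimately have "exp b + exp (-b) \<le> 2 * exp (b\<^sup>2)" by linarith
    then show ?thesis by simp
  qed
  show ?thesis
  proof (cases "a \<ge> 0")
    case True then show ?thesis using key by simp
  next
    case False then show ?thesis using key[of "-a"] by (simp add: add.commute)
  qed
qed

lemma step_mgf: "measure_pmf.expectation srw_step (\<lambda>v::int^'d. exp (a * real_of_int (v $ j))) \<le> exp (a\<^sup>2)"
proof -
  let ?F = "\<lambda>v::int^'d. exp (a * real_of_int (v $ j))"
  have "measure_pmf.expectation srw_step ?F = measure_pmf.expectation (map_pmf uminus srw_step) ?F"
    by (simp add: step_sym)
  also have "\<dots> = measure_pmf.expectation srw_step (\<lambda>v. ?F (-v))" by simp
  finally have eq: "measure_pmf.expectation srw_step ?F = measure_pmf.expectation srw_step (\<lambda>v. ?F (-v))" .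
  have "measure_pmf.expectation srw_step ?F = measure_pmf.expectation srw_step (\<lambda>v. (?F v + ?F (-v)) / 2)"
    using eq by (simp add: integral_add)
  also have "\<dots> \<le> exp (a\<^sup>2)"
  proof (rule measure_pmf.integral_le_const)
    show "AE v in measure_pmf srw_step. (?F v + ?F (-v)) / 2 \<le> exp (a\<^sup>2)"
      unfolding AE_measure_pmf_iff set_step
    proof
      fix v :: "int^'d" assume "v \<in> Vst"
      then obtain i where "v = axis i 1 \<or> v = axis i (-1)" unfolding Vst_def by auto
      hence "v $ j = 0 \<or> v $ j = 1 \<or> v $ j = -1" by (auto simp: axis_def split: if_splits)
      moreover have "exp 0 \<le> exp (a\<^sup>2)" by simp
      ultimately show "(?F v + ?F (-v)) / 2 \<le> exp (a\<^sup>2)"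
        using cosh_le[of a] by (auto simp: add.commute)
    qed
  qed simp
  finally show ?thesis .
qed

lemma srw_mgf: "measure_pmf.expectation (srw n) (\<lambda>v::int^'d. exp (a * real_of_int (v $ j))) \<le> exp (a\<^sup>2 * real n)"
proof (induction n)
  case 0 then show ?case by simp
next
  case (Suc n)
  let ?F = "\<lambda>v::int^'d. exp (a * real_of_int (v $ j))"
  have "measure_pmf.expectation (srw (Suc n)) ?F
      = measure_pmf.expectation (srw n) (\<lambda>c. measure_pmf.expectation srw_step (\<lambda>b. ?F (c + b)))"
    unfolding srw_Suc_bind by (subst E_bind) (auto simp: fin_srw set_step Vst_fin)
  also have "\<dots> = measure_pmf.expectation (srw n) (\<lambda>c. ?F c * measure_pmf.expectation srw_step ?F)"
    by (simp add: distrib_left exp_add)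
  also have "\<dots> = measure_pmf.expectation (srw n) ?F * measure_pmf.expectation srw_step ?F"
    by simp
  also have "\<dots> \<le> exp (a\<^sup>2 * real n) * exp (a\<^sup>2)"
    by (rule mult_mono[OF Suc.IH step_mgf]) (auto intro: integral_nonneg_AE)
  also have "\<dots> = exp (a\<^sup>2 * real (Suc n))" by (simp add: exp_add[symmetric] algebra_simps)
  finally show ?case .
qed




lemma rv_add: "real_vec (a + b) = real_vec a + real_vec b"
  by (simp add: real_vec_def vec_eq_iff)

lemma rv_nth[simp]: "real_vec y $ j = real_of_int (y $ j)"
  by (simp add: real_vec_def)

lemma norm_le_coord: "\<exists>j. norm (z :: real ^ 'd) \<le> sqrt (real CARD('d)) * \<bar>z $ j\<bar>"
proof -
  have fb: "finite (Basis :: (real^'d) set)" "(Basis :: (real^'d) set) \<noteq> {}" by auto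
  have "infnorm z \<in> (\<lambda>i. \<bar>z \<bullet> i\<bar>) ` (Basis :: (real^'d) set)"
    unfolding infnorm_Max by (rule Max_in) (use fb in auto)
  then obtain b where b: "b \<in> (Basis :: (real^'d) set)" and bm: "infnorm z = \<bar>z \<bullet> b\<bar>"
    by auto
  from b obtain j where j: "b = axis j 1" unfolding Basis_vec_def by auto
  have "norm z \<le> sqrt (real DIM(real^'d)) * infnorm z" by (rule norm_le_infnorm)
  also have "\<dots> = sqrt (real CARD('d)) * \<bar>z $ j\<bar>"
    using bm j by (simp add: cart_eq_inner_axis)
  finally show ?thesis by blast
qed

lemma exp_norm_le:
  fixes z :: "real ^ 'd" and c :: real
  assumes "c \<ge> 0"
  shows "exp (c * norm z) \<le> (\<Sum>j\<in>UNIV. exp (c * sqrt (real CARD('d)) * z $ j) + exp (- (c * sqrt (real CARD('d))) * z $ j))"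
proof -
  let ?c = "c * sqrt (real CARD('d))"
  obtain j where j: "norm z \<le> sqrt (real CARD('d)) * \<bar>z $ j\<bar>" using norm_le_coord by blast
  have "exp (c * norm z) \<le> exp (?c * \<bar>z $ j\<bar>)"
    using mult_left_mono[OF j assms] by (simp add: mult.assoc)
  also have "\<dots> \<le> exp (?c * z $ j) + exp (- ?c * z $ j)"
    by (cases "z $ j \<ge> 0") auto
  also have "\<dots> \<le> (\<Sum>j\<in>UNIV. exp (?c * z $ j) + exp (- ?c * z $ j))"
    by (rule member_le_sum) (auto intro: add_nonneg_nonneg)
  finally show ?thesis .
qed

lemma E_expnorm:
  assumes "c \<ge> 0"
  shows "measure_pmf.expectation (srw n) (\<lambda>S::int^'d. exp (c * norm (real_vec S)))
     \<le> 2 * real CARD('d) * exp (real CARD('d) * c\<^sup>2 * real n)"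
proof -
  let ?c = "c * sqrt (real CARD('d))"
  have "measure_pmf.expectation (srw n) (\<lambda>S::int^'d. exp (c * norm (real_vec S)))
     \<le> measure_pmf.expectation (srw n) (\<lambda>S::int^'d. \<Sum>j\<in>UNIV. exp (?c * real_of_int (S $ j)) + exp (- ?c * real_of_int (S $ j)))"
    using exp_norm_le[OF assms, of "real_vec _"] by (intro integral_mono) auto
  also have "\<dots> = (\<Sum>j\<in>UNIV. measure_pmf.expectation (srw n) (\<lambda>S::int^'d. exp (?c * real_of_int (S $ j)))
                   + measure_pmf.expectation (srw n) (\<lambda>S::int^'d. exp (- ?c * real_of_int (S $ j))))"
    by (simp add: integral_sum integral_add)
  also have "\<dots> \<le> (\<Sum>j\<in>(UNIV::'d set). exp (?c\<^sup>2 * real n) + exp ((- ?c)\<^sup>2 * real n))"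
    by (intro sum_mono add_mono srw_mgf)
  also have "\<dots> = 2 * real CARD('d) * exp (real CARD('d) * c\<^sup>2 * real n)"
    by (simp add: power_mult_distrib algebra_simps)
  finally show ?thesis .
qed

lemma E_normexp:
  assumes "c \<ge> 0" "n \<ge> 1"
  shows "measure_pmf.expectation (srw n) (\<lambda>S::int^'d. norm (real_vec S) * exp (c * norm (real_vec S)))
     \<le> 2 * real CARD('d) * sqrt (real n) * exp (2 * real CARD('d) * c\<^sup>2 * real n + 2 * real CARD('d))"
proof -
  define a where "a = sqrt (real n)"
  have a0: "a > 0" using assms by (simp add: a_def)
  have pw: "r * exp (c * r) \<le> a * exp ((c + 1 / a) * r)" if "r \<ge> 0" for r :: real
  proof -
    have "1 + r / a \<le> exp (r / a)" by (rule exp_ge_add_one_self)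
    hence "r \<le> a * exp (r / a)" using a0 by (simp add: field_simps)
    hence "r * exp (c * r) \<le> a * exp (r / a) * exp (c * r)" by (simp add: mult_right_mono)
    also have "\<dots> = a * exp ((c + 1 / a) * r)" by (simp add: exp_add[symmetric] algebra_simps)
    finally show ?thesis .
  qed
  have "measure_pmf.expectation (srw n) (\<lambda>S::int^'d. norm (real_vec S) * exp (c * norm (real_vec S)))
      \<le> measure_pmf.expectation (srw n) (\<lambda>S::int^'d. a * exp ((c + 1 / a) * norm (real_vec S)))"
    using pw by (intro integral_mono) auto
  also have "\<dots> = a * measure_pmf.expectation (srw n) (\<lambda>S::int^'d. exp ((c + 1 / a) * norm (real_vec S)))"
    by simp
  also have "\<dots> \<le> a * (2 * real CARD('d) * exp (real CARD('d) * (c + 1 / a)\<^sup>2 * real n))"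
    using a0 assms by (intro mult_left_mono E_expnorm) auto
  also have "\<dots> \<le> a * (2 * real CARD('d) * exp (2 * real CARD('d) * c\<^sup>2 * real n + 2 * real CARD('d)))"
  proof -
    have "(c + 1 / a)\<^sup>2 \<le> 2 * c\<^sup>2 + 2 * (1 / a)\<^sup>2"
      by (smt (verit) sum_squares_bound power2_sum two_realpow_ge_one sum_power2_ge_zero
          power2_eq_square mult_2 zero_le_power2)
    hence "(c + 1 / a)\<^sup>2 * real n \<le> (2 * c\<^sup>2 + 2 * (1 / a)\<^sup>2) * real n"
      by (simp add: mult_right_mono)
    also have "\<dots> = 2 * c\<^sup>2 * real n + 2" using assms a0 by (simp add: a_def field_simps)
    finally have "real CARD('d) * (c + 1 / a)\<^sup>2 * real n \<le> real CARD('d) * (2 * c\<^sup>2 * real n + 2)"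
      by (simp add: mult.assoc)
    then show ?thesis using a0 by (simp add: algebra_simps)
  qed
  finally show ?thesis by (simp add: a_def mult_ac)
qed




lemma abs_E_le:
  fixes F G :: "'a \<Rightarrow> real"
  assumes "finite (set_pmf M)" "\<And>x. \<bar>F x\<bar> \<le> G x"
  shows "\<bar>measure_pmf.expectation M F\<bar> \<le> measure_pmf.expectation M G"
  using assms
  by (intro order_trans[OF integral_abs_bound integral_mono]) (auto intro: integrable_measure_pmf_finite)

lemma exp_diff_le: "\<bar>exp (u::real) - exp v\<bar> \<le> \<bar>u - v\<bar> * (exp u + exp v)"
proof -
  have *: "exp v - exp u \<le> (v - u) * exp v" if "u \<le> v" for u v :: real
  proof -
    have "1 + (u - v) \<le> exp (u - v)" by (rule exp_ge_add_one_self)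
    hence "(1 + (u - v)) * exp v \<le> exp (u - v) * exp v" by (simp add: mult_right_mono)
    hence "(1 + (u - v)) * exp v \<le> exp u" by (simp add: exp_diff)
    thus ?thesis by (simp add: algebra_simps)
  qed
  show ?thesis
  proof (cases "u \<le> v")
    case True
    have "0 \<le> exp v - exp u" using True by simp
    moreover have "(v - u) * exp v \<le> (v - u) * (exp u + exp v)"
      using True by (intro mult_left_mono) auto
    ultimately show ?thesis using *[OF True] True by (simp add: abs_if)
  next
    case False
    have "0 \<le> exp u - exp v" using False by simp
    moreover have "(u - v) * exp u \<le> (u - v) * (exp u + exp v)"
      using False by (intro mult_left_mono) auto
    moreover have "exp u - exp v \<le> (u - v) * exp u" using *[of v u] False by simp
    moreover have "\<bar>exp u - exp v\<bar> = exp u - exp v" "\<bar>u - v\<bar> = u - v" using False by auto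
    ultimately show ?thesis by linarith
  qed
qed

lemma main_le:
  fixes g :: "real ^ 'd \<Rightarrow> real" and \<beta> L \<epsilon> :: real and s n :: nat and x :: "int ^ 'd"
  assumes "\<beta> > 0" "L-lipschitz_on UNIV g" "\<epsilon> > 0" "n \<ge> 1"
  defines "c \<equiv> \<beta> * L * \<epsilon>" and "K0 \<equiv> exp (\<beta> * \<bar>g 0\<bar>)" and "dd \<equiv> real CARD('d)"
  shows "\<bar>G_eps \<beta> g \<epsilon> s x - G_eps \<beta> g \<epsilon> (s + n) x\<bar>
     \<le> (2 * K0 * c * exp (c * norm (real_vec x))) * (2 * dd * exp (dd * c\<^sup>2 * real s))
        * (2 * dd * sqrt (real n) * exp (2 * dd * c\<^sup>2 * real n + 2 * dd))"
proof -
  have L0: "L \<ge> 0" using assms(2) by (rule lipschitz_on_nonneg)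
  have c0: "c \<ge> 0" using assms L0 by (simp add: c_def)
  define f where "f y = exp (\<beta> * g (\<epsilon> *\<^sub>R real_vec (y + x)))" for y
  define N where "N y = norm (real_vec y)" for y :: "int ^ 'd"
  define nx where "nx = N x"
  have gbound: "g z \<le> \<bar>g 0\<bar> + L * norm z" for z
  proof -
    have "dist (g z) (g 0) \<le> L * dist z 0" using assms(2) by (intro lipschitz_onD) auto
    hence "\<bar>g z - g 0\<bar> \<le> L * norm z" by (simp add: dist_real_def dist_norm)
    thus ?thesis by linarith
  qed
  have fbound: "f y \<le> K0 * exp (c * (N y + nx))" for y
  proof -
    have "norm (\<epsilon> *\<^sub>R real_vec (y + x)) \<le> \<epsilon> * (N y + nx)"
      using assms(3) norm_triangle_ineq[of "real_vec y" "real_vec x"]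
      by (simp add: rv_add N_def nx_def)
    hence "g (\<epsilon> *\<^sub>R real_vec (y + x)) \<le> \<bar>g 0\<bar> + L * (\<epsilon> * (N y + nx))"
      using gbound[of "\<epsilon> *\<^sub>R real_vec (y + x)"] mult_left_mono[OF _ L0] by fastforce
    hence "\<beta> * g (\<epsilon> *\<^sub>R real_vec (y + x)) \<le> \<beta> * (\<bar>g 0\<bar> + L * (\<epsilon> * (N y + nx)))"
      using assms(1) by (intro mult_left_mono) auto
    also have "\<dots> = \<beta> * \<bar>g 0\<bar> + c * (N y + nx)" unfolding c_def by (simp add: algebra_simps)
    finally have "\<beta> * g (\<epsilon> *\<^sub>R real_vec (y + x)) \<le> \<beta> * \<bar>g 0\<bar> + c * (N y + nx)" .
    thus ?thesis by (simp add: f_def K0_def exp_add[symmetric])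
  qed
  define K where "K = 2 * K0 * c * exp (c * nx)"
  have diff: "\<bar>f a - f (a + b)\<bar> \<le> K * exp (c * N a) * (N b * exp (c * N b))" for a b
  proof -
    have "\<bar>g (\<epsilon> *\<^sub>R real_vec (a + x)) - g (\<epsilon> *\<^sub>R real_vec (a + b + x))\<bar>
        \<le> L * norm (\<epsilon> *\<^sub>R real_vec (a + x) - \<epsilon> *\<^sub>R real_vec (a + b + x))"
      using lipschitz_onD[OF assms(2)] by (simp add: dist_real_def dist_norm)
    also have "norm (\<epsilon> *\<^sub>R real_vec (a + x) - \<epsilon> *\<^sub>R real_vec (a + b + x)) = \<epsilon> * N b"
    proof -
      have "\<epsilon> *\<^sub>R real_vec (a + x) - \<epsilon> *\<^sub>R real_vec (a + b + x) = - (\<epsilon> *\<^sub>R real_vec b)"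
        by (simp add: rv_add algebra_simps)
      thus ?thesis using assms(3) by (simp add: N_def)
    qed
    finally have gd: "\<bar>\<beta> * g (\<epsilon> *\<^sub>R real_vec (a + x)) - \<beta> * g (\<epsilon> *\<^sub>R real_vec (a + b + x))\<bar> \<le> c * N b"
      using assms(1) unfolding c_def
      by (simp add: right_diff_distrib[symmetric] abs_mult mult.assoc mult_left_mono)
    have Nab: "N (a + b) \<le> N a + N b" unfolding N_def rv_add by (rule norm_triangle_ineq)
    have Nb0: "N b \<ge> 0" "N a \<ge> 0" by (auto simp: N_def)
    have f1: "f a \<le> K0 * exp (c * nx) * exp (c * N a) * exp (c * N b)"
    proof -
      have "f a \<le> K0 * exp (c * (N a + nx))" by (rule fbound)
      also have "\<dots> \<le> K0 * exp (c * (N a + N b + nx))"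
        using c0 Nb0 by (simp add: K0_def mult_left_mono)
      finally show ?thesis by (simp add: exp_add[symmetric] algebra_simps)
    qed
    have f2: "f (a + b) \<le> K0 * exp (c * nx) * exp (c * N a) * exp (c * N b)"
    proof -
      have "f (a + b) \<le> K0 * exp (c * (N (a + b) + nx))" by (rule fbound)
      also have "\<dots> \<le> K0 * exp (c * (N a + N b + nx))"
        using c0 Nab by (simp add: K0_def mult_left_mono)
      finally show ?thesis by (simp add: exp_add[symmetric] algebra_simps)
    qed
    have "\<bar>f a - f (a + b)\<bar> \<le> \<bar>\<beta> * g (\<epsilon> *\<^sub>R real_vec (a + x)) - \<beta> * g (\<epsilon> *\<^sub>R real_vec (a + b + x))\<bar> * (f a + f (a + b))"
      unfolding f_def by (simp only: add.assoc exp_diff_le)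
    also have "\<dots> \<le> (c * N b) * (f a + f (a + b))"
      by (rule mult_right_mono[OF gd]) (simp add: f_def)
    finally have "\<bar>f a - f (a + b)\<bar> \<le> (c * N b) * (f a + f (a + b))" .
    also have "\<dots> \<le> (c * N b) * (2 * (K0 * exp (c * nx) * exp (c * N a) * exp (c * N b)))"
      using f1 f2 c0 Nb0 by (intro mult_left_mono) auto
    also have "\<dots> = K * exp (c * N a) * (N b * exp (c * N b))" by (simp add: K_def)
    finally show ?thesis .
  qed
  have Gt: "G_eps \<beta> g \<epsilon> (s + n) x = measure_pmf.expectation (srw s) (\<lambda>a. measure_pmf.expectation (srw n) (\<lambda>b. f (a + b)))"
    unfolding G_eps_def srw_add f_def by (subst E_bind) (auto simp: fin_srw)
  have Gs: "G_eps \<beta> g \<epsilon> s x = measure_pmf.expectation (srw s) f"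
    unfolding G_eps_def f_def[abs_def] by simp
  have ED: "measure_pmf.expectation (srw s) (\<lambda>a. measure_pmf.expectation (srw n) (\<lambda>b. f a - f (a + b)))
     = measure_pmf.expectation (srw s) f - measure_pmf.expectation (srw s) (\<lambda>a. measure_pmf.expectation (srw n) (\<lambda>b. f (a + b)))"
    by (simp add: integral_diff)
  have "G_eps \<beta> g \<epsilon> s x - G_eps \<beta> g \<epsilon> (s + n) x
     = measure_pmf.expectation (srw s) (\<lambda>a. measure_pmf.expectation (srw n) (\<lambda>b. f a - f (a + b)))"
    unfolding ED Gs Gt ..
  hence "\<bar>G_eps \<beta> g \<epsilon> s x - G_eps \<beta> g \<epsilon> (s + n) x\<bar>
     \<le> measure_pmf.expectation (srw s) (\<lambda>a. measure_pmf.expectation (srw n) (\<lambda>b. K * exp (c * N a) * (N b * exp (c * N b))))"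
    by (simp only:) (intro abs_E_le fin_srw diff)
  also have "\<dots> = K * measure_pmf.expectation (srw s) (\<lambda>a. exp (c * N a)) * measure_pmf.expectation (srw n) (\<lambda>b. N b * exp (c * N b))"
    by simp
  also have "\<dots> \<le> K * (2 * dd * exp (dd * c\<^sup>2 * real s)) * (2 * dd * sqrt (real n) * exp (2 * dd * c\<^sup>2 * real n + 2 * dd))"
  proof (intro mult_mono)
    show "measure_pmf.expectation (srw s) (\<lambda>a. exp (c * N a)) \<le> 2 * dd * exp (dd * c\<^sup>2 * real s)"
      unfolding N_def dd_def by (rule E_expnorm[OF c0])
    show "measure_pmf.expectation (srw n) (\<lambda>b. N b * exp (c * N b)) \<le> 2 * dd * sqrt (real n) * exp (2 * dd * c\<^sup>2 * real n + 2 * dd)"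
      unfolding N_def dd_def by (rule E_normexp[OF c0 assms(4)])
  qed (auto simp: K_def K0_def c0 N_def dd_def intro!: integral_nonneg_AE mult_nonneg_nonneg)
  finally show ?thesis by (simp add: K_def nx_def N_def)
qed




lemma lt_case:
  fixes g :: "real ^ 'd \<Rightarrow> real" and \<beta> L \<epsilon> :: real and s t :: nat and x :: "int ^ 'd"
  assumes "\<beta> > 0" "L-lipschitz_on UNIV g" "\<epsilon> > 0" "s < t"
  shows "\<bar>G_eps \<beta> g \<epsilon> s x - G_eps \<beta> g \<epsilon> t x\<bar>
     \<le> (8 * real CARD('d)^2 * exp (\<beta> * \<bar>g 0\<bar>) * (\<beta> * L) * exp (2 * real CARD('d)) + 1) * \<epsilon> * sqrt \<bar>real t - real s\<bar>
        * exp ((\<beta> * L + 2 * real CARD('d) * (\<beta> * L)\<^sup>2 + 1) * (\<epsilon> * norm (real_vec x) + \<epsilon>\<^sup>2 * real s + \<epsilon>\<^sup>2 * real t))"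
proof -
  define n where "n = t - s"
  have n1: "n \<ge> 1" and tn: "t = s + n" using assms(4) by (auto simp: n_def)
  have L0: "L \<ge> 0" using assms(2) by (rule lipschitz_on_nonneg)
  define B where "B = \<beta> * L"
  have B0: "B \<ge> 0" using L0 assms(1) by (simp add: B_def)
  define d where "d = real CARD('d)"
  have d1: "d \<ge> 1" by (simp add: d_def)
  define K0 where "K0 = exp (\<beta> * \<bar>g 0\<bar>)"
  define nx where "nx = norm (real_vec x)"
  have nx0: "nx \<ge> 0" by (simp add: nx_def)
  define A0 where "A0 = 8 * d^2 * K0 * B * exp (2 * d)"
  have A00: "A0 \<ge> 0" unfolding A0_def K0_def using B0 by simp
  define E1 where "E1 = B * \<epsilon> * nx + d * B\<^sup>2 * \<epsilon>\<^sup>2 * real s + 2 * d * B\<^sup>2 * \<epsilon>\<^sup>2 * real n"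
  define C2 where "C2 = B + 2 * d * B\<^sup>2 + 1"
  have "\<bar>G_eps \<beta> g \<epsilon> s x - G_eps \<beta> g \<epsilon> t x\<bar>
     \<le> (2 * K0 * (B * \<epsilon>) * exp ((B * \<epsilon>) * nx)) * (2 * d * exp (d * (B * \<epsilon>)\<^sup>2 * real s))
        * (2 * d * sqrt (real n) * exp (2 * d * (B * \<epsilon>)\<^sup>2 * real n + 2 * d))"
    unfolding tn K0_def nx_def d_def B_def using main_le[OF assms(1-3) n1, of s x]
    by (simp add: mult.assoc)
  also have "\<dots> = A0 * \<epsilon> * sqrt (real n) * exp E1"
    unfolding A0_def E1_def
    by (simp add: exp_add[symmetric] power_mult_distrib power2_eq_square algebra_simps)
  also have "\<dots> \<le> (A0 + 1) * \<epsilon> * sqrt (real n) * exp (C2 * (\<epsilon> * nx + \<epsilon>\<^sup>2 * real s + \<epsilon>\<^sup>2 * real t))"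
  proof (intro mult_mono)
    have "B \<le> C2" using B0 d1 by (simp add: C2_def)
    hence "B * (\<epsilon> * nx) \<le> C2 * (\<epsilon> * nx)"
      using assms(3) nx0 by (intro mult_right_mono) auto
    hence "B * \<epsilon> * nx \<le> C2 * (\<epsilon> * nx)" by (simp add: mult.assoc)
    moreover have "d * B\<^sup>2 * \<epsilon>\<^sup>2 * real s \<le> C2 * (\<epsilon>\<^sup>2 * real s)"
    proof -
      have "d * B\<^sup>2 \<le> C2" using B0 d1 by (simp add: C2_def)
      thus ?thesis by (simp add: mult_right_mono mult.assoc[symmetric])
    qed
    moreover have "2 * d * B\<^sup>2 * \<epsilon>\<^sup>2 * real n \<le> C2 * (\<epsilon>\<^sup>2 * real t)"
    proof -
      have h1: "2 * d * B\<^sup>2 \<le> C2" using B0 d1 by (simp add: C2_def)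
      have h2: "real n \<le> real t" by (simp add: tn)
      have C0: "C2 \<ge> 0" using B0 d1 by (simp add: C2_def)
      have "2 * d * B\<^sup>2 * (\<epsilon>\<^sup>2 * real n) \<le> C2 * (\<epsilon>\<^sup>2 * real n)"
        using h1 by (intro mult_right_mono) auto
      also have "\<dots> \<le> C2 * (\<epsilon>\<^sup>2 * real t)"
        using C0 h2 by (intro mult_left_mono mult_left_mono) auto
      finally show ?thesis by (simp add: mult.assoc)
    qed
    ultimately show "exp E1 \<le> exp (C2 * (\<epsilon> * nx + \<epsilon>\<^sup>2 * real s + \<epsilon>\<^sup>2 * real t))"
      unfolding E1_def by (simp add: distrib_left)
  qed (use assms(3) A00 in auto)
  finally show ?thesis
    by (simp add: A0_def C2_def B_def d_def K0_def nx_def n_def of_nat_diff less_imp_le[OF assms(4)])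
qed


theorem lemma5p3:
  fixes g :: "real ^ 'd \<Rightarrow> real" and \<beta> L :: real
  assumes "CARD('d) \<ge> 3" and "\<beta> > 0" and "L-lipschitz_on UNIV g"
  shows "\<exists>C1 > 0. \<exists>C2 > 0. \<forall>\<epsilon> > 0. \<forall>(s::nat) (t::nat) (x::int ^ 'd).
           \<bar>G_eps \<beta> g \<epsilon> s x - G_eps \<beta> g \<epsilon> t x\<bar>
             \<le> C1 * \<epsilon> * sqrt \<bar>real t - real s\<bar>
                * exp (C2 * (\<epsilon> * norm (real_vec x) + \<epsilon>\<^sup>2 * real s + \<epsilon>\<^sup>2 * real t))"
proof -
  have L0: "L \<ge> 0" using assms(3) by (rule lipschitz_on_nonneg)
  have B0: "\<beta> * L \<ge> 0" using L0 assms(2) by simp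
  define C1 where "C1 = 8 * real CARD('d)^2 * exp (\<beta> * \<bar>g 0\<bar>) * (\<beta> * L) * exp (2 * real CARD('d)) + 1"
  define C2 where "C2 = \<beta> * L + 2 * real CARD('d) * (\<beta> * L)\<^sup>2 + 1"
  have C1p: "C1 > 0" unfolding C1_def using B0 by (simp add: add_nonneg_pos)
  have C2p: "C2 > 0" unfolding C2_def using B0 by (simp add: add_nonneg_pos)
  have main: "\<bar>G_eps \<beta> g \<epsilon> s x - G_eps \<beta> g \<epsilon> t x\<bar>
             \<le> C1 * \<epsilon> * sqrt \<bar>real t - real s\<bar>
                * exp (C2 * (\<epsilon> * norm (real_vec x) + \<epsilon>\<^sup>2 * real s + \<epsilon>\<^sup>2 * real t))"
    if e: "\<epsilon> > 0" for \<epsilon> s t x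
  proof (cases s t rule: linorder_cases)
    case less
    then show ?thesis unfolding C1_def C2_def by (rule lt_case[OF assms(2,3) e])
  next
    case equal
    then show ?thesis by simp
  next
    case greater
    have "\<bar>G_eps \<beta> g \<epsilon> t x - G_eps \<beta> g \<epsilon> s x\<bar>
             \<le> C1 * \<epsilon> * sqrt \<bar>real s - real t\<bar>
                * exp (C2 * (\<epsilon> * norm (real_vec x) + \<epsilon>\<^sup>2 * real t + \<epsilon>\<^sup>2 * real s))"
      unfolding C1_def C2_def by (rule lt_case[OF assms(2,3) e greater])
    then show ?thesis by (simp add: abs_minus_commute add_ac)
  qed
  show ?thesis using C1p C2p main by blast
qed

end
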